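(* Let $G$ be a maximal $3$-$\gamma_{c}$-vertex critical graph of order $n$, with independence number $\alpha$ and clique number $\omega$. Then $\alpha\cdot\omega\leq\lfloor\frac{n-1}{2}\rfloor\cdot\lceil\frac{n-1}{2}\rceil$; moreover, $\alpha\cdot\omega=(\frac{n-1}{2})^{2}$ if and only if $G\in\mathcal{G}_{1}(l)$ for some $l\geq 2$.
   Context: All graphs are finite, simple and connected. A set $D\subseteq V(G)$ is a connected dominating set of $G$ if every vertex of $G$ is in $D$ or adjacent to a vertex of $D$, and $G[D]$ is connected; $\gamma_{c}(G)$ is the minimum cardinality of such a set. $G$ is $k$-$\gamma_{c}$-edge critical if $\gamma_{c}(G)=k$ and $\gamma_{c}(G+uv)<k$ for every pair of non-adjacent vertices $u,v$. A $2$-connected graph $G$ is $k$-$\gamma_{c}$-vertex critical if $\gamma_{c}(G)=k$ and $\gamma_{c}(G-v)<k$ for every $v\in V(G)$. $G$ is maximal $k$-$\gamma_{c}$-vertex critical if it is both $k$-$\gamma_{c}$-edge critical and $k$-$\gamma_{c}$-vertex critical. For $l\geq 2$, the class $\mathcal{G}_{1}(l)$ consists of the graphs on vertex set $\{v,q_{1},\dots,q_{l},z_{1},\dots,z_{l}\}$ whose edges are: $vz_{i}$ for all $i$; $q_{i}q_{j}$ for all $i\neq j$; and $z_{i}q_{j}$ for all $i\neq j$. *)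

theory Defs
  imports Complex_Main
begin

definition simple_graph :: "'a set \<Rightarrow> ('a \<Rightarrow> 'a \<Rightarrow> bool) \<Rightarrow> bool" where
  "simple_graph V E \<longleftrightarrow> finite V \<and> V \<noteq> {} \<and>
     (\<forall>u v. E u v \<longrightarrow> u \<in> V \<and> v \<in> V \<and> u \<noteq> v \<and> E v u)"

definition connected_set :: "('a \<Rightarrow> 'a \<Rightarrow> bool) \<Rightarrow> 'a set \<Rightarrow> bool" where
  "connected_set E S \<longleftrightarrow> S \<noteq> {} \<and>
     (\<forall>u\<in>S. \<forall>v\<in>S. (\<lambda>x y. x \<in> S \<and> y \<in> S \<and> E x y)\<^sup>*\<^sup>* u v)"

definition connected_graph :: "'a set \<Rightarrow> ('a \<Rightarrow> 'a \<Rightarrow> bool) \<Rightarrow> bool" where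
  "connected_graph V E \<longleftrightarrow> simple_graph V E \<and> connected_set E V"

definition del_vertex_edges :: "('a \<Rightarrow> 'a \<Rightarrow> bool) \<Rightarrow> 'a \<Rightarrow> ('a \<Rightarrow> 'a \<Rightarrow> bool)" where
  "del_vertex_edges E w = (\<lambda>x y. E x y \<and> x \<noteq> w \<and> y \<noteq> w)"

definition add_edge :: "('a \<Rightarrow> 'a \<Rightarrow> bool) \<Rightarrow> 'a \<Rightarrow> 'a \<Rightarrow> ('a \<Rightarrow> 'a \<Rightarrow> bool)" where
  "add_edge E u v = (\<lambda>x y. E x y \<or> (x = u \<and> y = v) \<or> (x = v \<and> y = u))"

definition dominating :: "'a set \<Rightarrow> ('a \<Rightarrow> 'a \<Rightarrow> bool) \<Rightarrow> 'a set \<Rightarrow> bool" where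
  "dominating V E D \<longleftrightarrow> D \<subseteq> V \<and> (\<forall>x\<in>V. x \<in> D \<or> (\<exists>d\<in>D. E x d))"

definition connected_dominating :: "'a set \<Rightarrow> ('a \<Rightarrow> 'a \<Rightarrow> bool) \<Rightarrow> 'a set \<Rightarrow> bool" where
  "connected_dominating V E D \<longleftrightarrow> dominating V E D \<and> connected_set E D"

definition gamma_c :: "'a set \<Rightarrow> ('a \<Rightarrow> 'a \<Rightarrow> bool) \<Rightarrow> nat" where
  "gamma_c V E = (LEAST k. \<exists>D. connected_dominating V E D \<and> card D = k)"

definition two_connected :: "'a set \<Rightarrow> ('a \<Rightarrow> 'a \<Rightarrow> bool) \<Rightarrow> bool" where
  "two_connected V E \<longleftrightarrow> connected_graph V E \<and> card V \<ge> 3 \<and>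
     (\<forall>w\<in>V. connected_graph (V - {w}) (del_vertex_edges E w))"

definition edge_critical :: "nat \<Rightarrow> 'a set \<Rightarrow> ('a \<Rightarrow> 'a \<Rightarrow> bool) \<Rightarrow> bool" where
  "edge_critical k V E \<longleftrightarrow> connected_graph V E \<and> gamma_c V E = k \<and>
     (\<forall>u\<in>V. \<forall>v\<in>V. u \<noteq> v \<and> \<not> E u v \<longrightarrow> gamma_c V (add_edge E u v) < k)"

definition vertex_critical :: "nat \<Rightarrow> 'a set \<Rightarrow> ('a \<Rightarrow> 'a \<Rightarrow> bool) \<Rightarrow> bool" where
  "vertex_critical k V E \<longleftrightarrow> two_connected V E \<and> gamma_c V E = k \<and>
     (\<forall>w\<in>V. gamma_c (V - {w}) (del_vertex_edges E w) < k)"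

definition maximal_vertex_critical :: "nat \<Rightarrow> 'a set \<Rightarrow> ('a \<Rightarrow> 'a \<Rightarrow> bool) \<Rightarrow> bool" where
  "maximal_vertex_critical k V E \<longleftrightarrow> edge_critical k V E \<and> vertex_critical k V E"

definition independent_set :: "'a set \<Rightarrow> ('a \<Rightarrow> 'a \<Rightarrow> bool) \<Rightarrow> 'a set \<Rightarrow> bool" where
  "independent_set V E S \<longleftrightarrow> S \<subseteq> V \<and> (\<forall>x\<in>S. \<forall>y\<in>S. \<not> E x y)"

definition clique :: "'a set \<Rightarrow> ('a \<Rightarrow> 'a \<Rightarrow> bool) \<Rightarrow> 'a set \<Rightarrow> bool" where
  "clique V E S \<longleftrightarrow> S \<subseteq> V \<and> (\<forall>x\<in>S. \<forall>y\<in>S. x \<noteq> y \<longrightarrow> E x y)"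

definition independence_number :: "'a set \<Rightarrow> ('a \<Rightarrow> 'a \<Rightarrow> bool) \<Rightarrow> nat" where
  "independence_number V E = Max {card S | S. independent_set V E S}"

definition clique_number :: "'a set \<Rightarrow> ('a \<Rightarrow> 'a \<Rightarrow> bool) \<Rightarrow> nat" where
  "clique_number V E = Max {card S | S. clique V E S}"

definition graph_iso :: "'a set \<Rightarrow> ('a \<Rightarrow> 'a \<Rightarrow> bool) \<Rightarrow> 'b set \<Rightarrow> ('b \<Rightarrow> 'b \<Rightarrow> bool) \<Rightarrow> bool" where
  "graph_iso V E V' E' \<longleftrightarrow> (\<exists>f. bij_betw f V V' \<and>
     (\<forall>x\<in>V. \<forall>y\<in>V. E x y \<longleftrightarrow> E' (f x) (f y)))"

datatype g1_vertex = Vtx | Q nat | Z nat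

definition G1_V :: "nat \<Rightarrow> g1_vertex set" where
  "G1_V l = {Vtx} \<union> Q ` {1..l} \<union> Z ` {1..l}"

fun G1_adj :: "g1_vertex \<Rightarrow> g1_vertex \<Rightarrow> bool" where
  "G1_adj Vtx (Z i) = True"
| "G1_adj (Z i) Vtx = True"
| "G1_adj (Q i) (Q j) = (i \<noteq> j)"
| "G1_adj (Z i) (Q j) = (i \<noteq> j)"
| "G1_adj (Q j) (Z i) = (i \<noteq> j)"
| "G1_adj _ _ = False"

definition G1_E :: "nat \<Rightarrow> g1_vertex \<Rightarrow> g1_vertex \<Rightarrow> bool" where
  "G1_E l x y \<longleftrightarrow> x \<in> G1_V l \<and> y \<in> G1_V l \<and> G1_adj x y"

definition in_G1 :: "nat \<Rightarrow> 'a set \<Rightarrow> ('a \<Rightarrow> 'a \<Rightarrow> bool) \<Rightarrow> bool" where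
  "in_G1 l V E \<longleftrightarrow> graph_iso V E (G1_V l) (G1_E l)"

end

theory Submission
  imports Defs
begin


locale crit =
  fixes V :: "'a set" and E :: "'a \<Rightarrow> 'a \<Rightarrow> bool"
  assumes fin: "finite V"
  and sym: "\<And>x y. E x y \<Longrightarrow> E y x"
  and irr: "\<And>x. \<not> E x x"
  and inV: "\<And>x y. E x y \<Longrightarrow> x \<in> V"
  and nodom: "\<And>a b. a \<in> V \<Longrightarrow> b \<in> V \<Longrightarrow> a = b \<or> E a b \<Longrightarrow>
       \<exists>x\<in>V. x \<noteq> a \<and> x \<noteq> b \<and> \<not> E x a \<and> \<not> E x b"
  and vc: "\<And>w. w \<in> V \<Longrightarrow> \<exists>a b. a \<in> V \<and> b \<in> V \<and> a \<noteq> w \<and> b \<noteq> w \<and> (a = b \<or> E a b) \<and>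
       (\<forall>x\<in>V. x \<noteq> w \<longrightarrow> x = a \<or> x = b \<or> E x a \<or> E x b)"
  and ec: "\<And>u v. u \<in> V \<Longrightarrow> v \<in> V \<Longrightarrow> u \<noteq> v \<Longrightarrow> \<not> E u v \<Longrightarrow>
       (\<forall>x\<in>V. x = u \<or> x = v \<or> E x u \<or> E x v) \<or>
       (\<exists>z\<in>V. (z = u \<or> E u z) \<and> (\<forall>x\<in>V. x \<noteq> v \<longrightarrow> x = u \<or> x = z \<or> E x u \<or> E x z)) \<or>
       (\<exists>z\<in>V. (z = v \<or> E v z) \<and> (\<forall>x\<in>V. x \<noteq> u \<longrightarrow> x = v \<or> x = z \<or> E x v \<or> E x z))"
begin

lemma S: assumes "w \<in> V"
  obtains a b where "a \<in> V" "b \<in> V" "a \<noteq> w" "b \<noteq> w" "a = b \<or> E a b"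
    "\<not> E w a" "\<not> E w b" "\<not> E a w" "\<not> E b w"
    "\<And>x. x \<in> V \<Longrightarrow> x \<noteq> w \<Longrightarrow> x = a \<or> x = b \<or> E x a \<or> E x b"
proof -
  obtain a b where ab: "a \<in> V" "b \<in> V" "a \<noteq> w" "b \<noteq> w" "a = b \<or> E a b"
    and d: "\<forall>x\<in>V. x \<noteq> w \<longrightarrow> x = a \<or> x = b \<or> E x a \<or> E x b"
    using vc[OF assms] by blast
  have n: "\<not> E w a \<and> \<not> E w b"
  proof
    show "\<not> E w a"
    proof
      assume "E w a"
      from nodom[OF ab(1,2,5)] obtain x where "x \<in> V" "x \<noteq> a" "x \<noteq> b" "\<not> E x a" "\<not> E x b" by blast
      with d \<open>E w a\<close> show False using \<open>w \<in> V\<close> ab(3) by auto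
    qed
    show "\<not> E w b"
    proof
      assume "E w b"
      from nodom[OF ab(1,2,5)] obtain x where "x \<in> V" "x \<noteq> a" "x \<noteq> b" "\<not> E x a" "\<not> E x b" by blast
      with d \<open>E w b\<close> show False using \<open>w \<in> V\<close> ab(4) by auto
    qed
  qed
  show ?thesis
    apply (rule that[OF ab(1-5)])
    using n d sym by auto
qed


lemma T1:
  assumes I: "independent_set V E I" and C: "clique V E C" and w: "w \<in> C" "w \<notin> I"
    and I2: "2 \<le> card I"
  shows "\<exists>t\<in>V. t \<notin> I \<and> t \<notin> C"
proof (rule ccontr)
  assume H: "\<not> ?thesis"
  have wV: "w \<in> V" using C w unfolding clique_def by auto
  obtain a b where ab: "a \<in> V" "b \<in> V" "a \<noteq> w" "b \<noteq> w" "a = b \<or> E a b"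
    "\<not> E w a" "\<not> E w b" "\<not> E a w" "\<not> E b w"
    and d: "\<And>x. x \<in> V \<Longrightarrow> x \<noteq> w \<Longrightarrow> x = a \<or> x = b \<or> E x a \<or> E x b"
    by (rule S[OF wV]) blast
  have notC: "x \<notin> C" if "x \<noteq> w" "\<not> E w x" for x
  proof
    assume "x \<in> C"
    then have "E w x" using C w(1) that(1) unfolding clique_def by auto
    then show False using that(2) by simp
  qed
  have aI: "a \<in> I" using H notC[of a] ab by blast
  have bI: "b \<in> I" using H notC[of b] ab by blast
  have "a = b" using ab(5) aI bI I unfolding independent_set_def by blast
  have "finite I" using I fin unfolding independent_set_def using finite_subset by blast
  have "\<not> I \<subseteq> {a}"
  proof
    assume "I \<subseteq> {a}"
    then have "card I \<le> card {a}" by (rule card_mono[rotated]) simp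
    then show False using I2 by simp
  qed
  then obtain y where y: "y \<in> I" "y \<noteq> a" by blast
  have "y \<in> V" using y I unfolding independent_set_def by auto
  then have "y = a \<or> y = b \<or> E y a \<or> E y b" using d y w by metis
  then show False using y aI bI I \<open>a = b\<close> unfolding independent_set_def by blast
qed


lemma indepD: "independent_set V E I \<Longrightarrow> x \<in> I \<Longrightarrow> y \<in> I \<Longrightarrow> \<not> E x y"
  unfolding independent_set_def by auto
lemma indepV: "independent_set V E I \<Longrightarrow> x \<in> I \<Longrightarrow> x \<in> V"
  unfolding independent_set_def by auto
lemma cliqueD: "clique V E C \<Longrightarrow> x \<in> C \<Longrightarrow> y \<in> C \<Longrightarrow> x \<noteq> y \<Longrightarrow> E x y"
  unfolding clique_def by auto
lemma cliqueV: "clique V E C \<Longrightarrow> x \<in> C \<Longrightarrow> x \<in> V"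
  unfolding clique_def by auto

lemma Bn:
  assumes I: "independent_set V E I" and C: "clique V E C" and IC: "I \<inter> C = {c}"
    and w: "w \<in> C" "w \<noteq> c"
  shows "\<exists>t\<in>V. t \<notin> I \<and> t \<notin> C \<and> E t c"
proof -
  have wV: "w \<in> V" using C w cliqueV by auto
  have cI: "c \<in> I" and cC: "c \<in> C" using IC by auto
  have cV: "c \<in> V" using cC C cliqueV by auto
  obtain a b where ab: "a \<in> V" "b \<in> V" "a \<noteq> w" "b \<noteq> w" "a = b \<or> E a b"
    "\<not> E w a" "\<not> E w b" "\<not> E a w" "\<not> E b w"
    and d: "\<And>x. x \<in> V \<Longrightarrow> x \<noteq> w \<Longrightarrow> x = a \<or> x = b \<or> E x a \<or> E x b"
    by (rule S[OF wV]) blast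
  have Ewc: "E w c" using cliqueD[OF C w(1) cC w(2)] .
  have key: "t \<notin> I \<and> t \<notin> C" if "t \<noteq> w" "\<not> E w t" "E c t" for t
  proof
    show "t \<notin> I" using indepD[OF I cI] that(3) by auto
    show "t \<notin> C" using cliqueD[OF C w(1) _ that(1)[symmetric]] that(2) by auto
  qed
  have "c \<noteq> a" "c \<noteq> b" using Ewc ab(6,7) by auto
  then have "E c a \<or> E c b" using d[OF cV] w(2)[symmetric] by auto
  then show ?thesis using key ab sym by blast
qed

lemma Bc:
  assumes I: "independent_set V E I" and C: "clique V E C" and IC: "I \<inter> C = {c}"
    and w: "w \<in> C" "w \<noteq> c" and allT: "\<And>t. t \<in> V \<Longrightarrow> t \<notin> I \<Longrightarrow> t \<notin> C \<Longrightarrow> E t c"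
  shows False
proof -
  have wV: "w \<in> V" using C w cliqueV by auto
  have cI: "c \<in> I" and cC: "c \<in> C" using IC by auto
  have cV: "c \<in> V" using cC C cliqueV by auto
  obtain a b where ab: "a \<in> V" "b \<in> V" "a \<noteq> c" "b \<noteq> c" "a = b \<or> E a b"
    "\<not> E c a" "\<not> E c b" "\<not> E a c" "\<not> E b c"
    and d: "\<And>x. x \<in> V \<Longrightarrow> x \<noteq> c \<Longrightarrow> x = a \<or> x = b \<or> E x a \<or> E x b"
    by (rule S[OF cV]) blast
  have inI: "t \<in> I" if "t \<in> V" "t \<noteq> c" "\<not> E c t" for t
  proof (rule ccontr)
    assume "t \<notin> I"
    show False
    proof (cases "t \<in> C")
      case True
      then show False using cliqueD[OF C cC True] that by auto
    next
      case False
      then show False using allT[OF that(1) \<open>t \<notin> I\<close>] sym that(3) by blast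
    qed
  qed
  have aI: "a \<in> I" using inI ab by auto
  have bI: "b \<in> I" using inI ab by auto
  have "a = b" using ab(5) indepD[OF I aI bI] by auto
  have wa: "w \<noteq> a" using aI w IC by auto
  have Ewa: "E w a" using d[OF wV w(2)] wa \<open>a = b\<close> by auto
  obtain x where x: "x \<in> V" "x \<noteq> a" "x \<noteq> w" "\<not> E x a" "\<not> E x w"
    using nodom[OF ab(1) wV] Ewa sym by blast
  show False
  proof (cases "x = c")
    case True
    then show False using x(5) cliqueD[OF C cC w(1) w(2)[symmetric]] by auto
  next
    case False
    then show False using d[OF x(1)] x \<open>a = b\<close> by auto
  qed
qed

lemma Sw_out:
  assumes I: "independent_set V E I" and C: "clique V E C" and w: "w \<in> C" "w \<notin> I"
    and I2: "2 \<le> card I"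
    and ab: "a \<in> V" "b \<in> V" "a \<noteq> w" "b \<noteq> w" "a = b \<or> E a b" "\<not> E w a" "\<not> E w b"
    and d: "\<And>x. x \<in> V \<Longrightarrow> x \<noteq> w \<Longrightarrow> x = a \<or> x = b \<or> E x a \<or> E x b"
  shows "(a \<notin> I \<and> a \<notin> C) \<or> (b \<notin> I \<and> b \<notin> C)"
proof (rule ccontr)
  assume H: "\<not> ?thesis"
  have notC: "x \<notin> C" if "x \<noteq> w" "\<not> E w x" for x
  proof
    assume "x \<in> C"
    then have "E w x" using C w(1) that(1) unfolding clique_def by auto
    then show False using that(2) by simp
  qed
  have aI: "a \<in> I" using H notC[of a] notC[of b] ab by blast
  have bI: "b \<in> I" using H notC[of a] notC[of b] ab by blast
  have "a = b" using ab(5) indepD[OF I aI bI] by auto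
  have "finite I" using I fin unfolding independent_set_def using finite_subset by blast
  have "\<not> I \<subseteq> {a}"
  proof
    assume "I \<subseteq> {a}"
    then have "card I \<le> card {a}" by (rule card_mono[rotated]) simp
    then show False using I2 by simp
  qed
  then obtain y where y: "y \<in> I" "y \<noteq> a" by blast
  have "y \<in> V" using y I indepV by auto
  then have "y = a \<or> y = b \<or> E y a \<or> E y b" using d y w by metis
  then show False using y aI bI indepD[OF I] \<open>a = b\<close> by blast
qed

lemma S_with:
  assumes w: "w \<in> V"
    and hr: "\<And>a b. a \<in> V \<Longrightarrow> b \<in> V \<Longrightarrow> a \<noteq> w \<Longrightarrow> b \<noteq> w \<Longrightarrow> a = b \<or> E a b \<Longrightarrow>
       \<not> E w a \<Longrightarrow> \<not> E w b \<Longrightarrow> (\<And>x. x \<in> V \<Longrightarrow> x \<noteq> w \<Longrightarrow> x = a \<or> x = b \<or> E x a \<or> E x b)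
       \<Longrightarrow> a = r \<or> b = r"
  shows "\<exists>p. p \<in> V \<and> p \<noteq> w \<and> \<not> E w p \<and> (p = r \<or> E r p) \<and> \<not> E w r \<and>
      (\<forall>x\<in>V. x \<noteq> w \<longrightarrow> x = r \<or> x = p \<or> E x r \<or> E x p)"
proof -
  obtain a b where ab: "a \<in> V" "b \<in> V" "a \<noteq> w" "b \<noteq> w" "a = b \<or> E a b"
    "\<not> E w a" "\<not> E w b" "\<not> E a w" "\<not> E b w"
    and d: "\<And>x. x \<in> V \<Longrightarrow> x \<noteq> w \<Longrightarrow> x = a \<or> x = b \<or> E x a \<or> E x b"
    by (rule S[OF w]) blast
  have "a = r \<or> b = r" using hr[OF ab(1-7) d] by blast
  then show ?thesis
  proof
    assume "a = r"
    show ?thesis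
      using ab d \<open>a = r\<close> sym by blast
  next
    assume "b = r"
    show ?thesis
      using ab d \<open>b = r\<close> sym by blast
  qed
qed


lemma B2:
  assumes I: "independent_set V E I" and C: "clique V E C" and IC: "I \<inter> C = {c}"
    and cardIC: "card I = card C"
    and VV: "V = I \<union> C \<union> {r, s}" and rs: "r \<notin> I" "r \<notin> C" "s \<notin> I" "s \<notin> C" "r \<noteq> s"
    and Erc: "E r c" and nEsc: "\<not> E s c"
    and w0: "w0 \<in> C" "w0 \<noteq> c" "\<not> E s w0"
    and y0: "y0 \<in> I" "y0 \<noteq> c" "E r y0"
  shows False
proof -
  have cI: "c \<in> I" and cC: "c \<in> C" using IC by auto
  have cV: "c \<in> V" and rV: "r \<in> V" and sV: "s \<in> V" using VV cC by auto
  have w0V: "w0 \<in> V" using VV w0 by auto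
  have CnI: "x \<notin> I" if "x \<in> C" "x \<noteq> c" for x using that IC by auto
  have hr: "a = r \<or> b = r" if w: "w \<in> C" "w \<noteq> c" and ab: "a \<in> V" "b \<in> V" "a \<noteq> w" "b \<noteq> w"
     "\<not> E w a" "\<not> E w b" and d: "\<And>x. x \<in> V \<Longrightarrow> x \<noteq> w \<Longrightarrow> x = a \<or> x = b \<or> E x a \<or> E x b"
     for w a b
  proof -
    have Ewc: "E w c" using cliqueD[OF C w(1) cC w(2)] .
    have key: "t = r" if "t \<in> V" "t \<noteq> w" "\<not> E w t" "E c t" for t
    proof -
      have "t \<notin> I" using indepD[OF I cI] that(4) by auto
      moreover have "t \<notin> C" using cliqueD[OF C w(1) _ that(2)[symmetric]] that(3) by auto
      moreover have "t \<noteq> s" using nEsc sym that(4) by auto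
      ultimately show "t = r" using that(1) VV by auto
    qed
    have "c \<noteq> a" "c \<noteq> b" using Ewc ab(5,6) by auto
    then have "E c a \<or> E c b" using d[OF cV] w(2)[symmetric] by auto
    then show ?thesis using key ab by blast
  qed
  have gS: "\<exists>p. p \<in> V \<and> p \<noteq> w \<and> \<not> E w p \<and> (p = r \<or> E r p) \<and> \<not> E w r \<and>
      (\<forall>x\<in>V. x \<noteq> w \<longrightarrow> x = r \<or> x = p \<or> E x r \<or> E x p)" if w: "w \<in> C" "w \<noteq> c" for w
  proof -
    have wV: "w \<in> V" using w VV by auto
    have H: "\<And>a b. a \<in> V \<Longrightarrow> b \<in> V \<Longrightarrow> a \<noteq> w \<Longrightarrow> b \<noteq> w \<Longrightarrow> a = b \<or> E a b \<Longrightarrow>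
       \<not> E w a \<Longrightarrow> \<not> E w b \<Longrightarrow> (\<And>x. x \<in> V \<Longrightarrow> x \<noteq> w \<Longrightarrow> x = a \<or> x = b \<or> E x a \<or> E x b)
       \<Longrightarrow> a = r \<or> b = r"
    proof -
      fix a b assume A: "a \<in> V" "b \<in> V" "a \<noteq> w" "b \<noteq> w" "a = b \<or> E a b" "\<not> E w a" "\<not> E w b"
        and D: "\<And>x. x \<in> V \<Longrightarrow> x \<noteq> w \<Longrightarrow> x = a \<or> x = b \<or> E x a \<or> E x b"
      show "a = r \<or> b = r" by (rule hr[OF w A(1-4) A(6,7) D])
    qed
    show ?thesis by (rule S_with[OF wV H])
  qed
  have nrC: "\<not> E w r" "\<not> E r w" if "w \<in> C" "w \<noteq> c" for w
    using gS[OF that] sym by blast+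
  have Ers: "E r s"
  proof -
    have "s \<noteq> w0" using rs w0 by auto
    have "r \<noteq> w0" using rs w0 by auto
    have "c \<noteq> w0" "c \<noteq> s" using w0 rs cC by auto
    have nEcs: "\<not> E c s" using nEsc sym by blast
    have nErw0: "\<not> E r w0" using nrC[OF w0(1,2)] by blast
    from ec[OF sV w0V \<open>s \<noteq> w0\<close> w0(3)]
    consider (b) "\<forall>x\<in>V. x = s \<or> x = w0 \<or> E x s \<or> E x w0"
      | (cs) z where "z \<in> V" "z = s \<or> E s z" "\<forall>x\<in>V. x \<noteq> w0 \<longrightarrow> x = s \<or> x = z \<or> E x s \<or> E x z"
      | (cw) z where "z \<in> V" "z = w0 \<or> E w0 z" "\<forall>x\<in>V. x \<noteq> s \<longrightarrow> x = w0 \<or> x = z \<or> E x w0 \<or> E x z"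
      by blast
    then show ?thesis
    proof cases
      case b
      then show ?thesis using rV rs(5) \<open>r \<noteq> w0\<close> nErw0 sym by blast
    next
      case cs
      have "c = z \<or> E c z" using cs(3) cV \<open>c \<noteq> w0\<close> \<open>c \<noteq> s\<close> nEcs by blast
      moreover have "c \<noteq> z" using cs(2) \<open>c \<noteq> s\<close> nEsc by auto
      ultimately have Ecz: "E c z" by simp
      have "z \<noteq> s" using Ecz nEcs by auto
      then have Esz: "E s z" using cs(2) by simp
      show ?thesis
      proof (cases "z = r")
        case True
        then show ?thesis using Esz sym by simp
      next
        case False
        have "r = s \<or> r = z \<or> E r s \<or> E r z" using cs(3) rV \<open>r \<noteq> w0\<close> by blast
        then have "E r s \<or> E r z" using rs(5) False by simp
        moreover have "\<not> E r z"
        proof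
          assume Erz: "E r z"
          have "z \<in> I \<or> z \<in> C \<or> z = r \<or> z = s" using cs(1) VV by auto
          moreover have "z \<notin> I" using indepD[OF I cI] Ecz by auto
          moreover have "z \<notin> C"
          proof
            assume "z \<in> C"
            moreover have "z \<noteq> c" using Ecz irr by auto
            ultimately show False using nrC Erz by blast
          qed
          ultimately show False using False \<open>z \<noteq> s\<close> by blast
        qed
        ultimately show ?thesis by simp
      qed
    next
      case cw
      have "r = w0 \<or> r = z \<or> E r w0 \<or> E r z" using cw(3) rV rs(5) by blast
      then have "r = z \<or> E r z" using \<open>r \<noteq> w0\<close> nErw0 by simp
      moreover have "r \<noteq> z" using cw(2) \<open>r \<noteq> w0\<close> nrC[OF w0(1,2)] by auto
      ultimately have Erz: "E r z" by simp
      have "z \<noteq> w0" using Erz nErw0 by auto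
      then have Ew0z: "E w0 z" using cw(2) by simp
      obtain p where p: "p \<in> V" "p \<noteq> w0" "\<not> E w0 p" "p = r \<or> E r p"
        and dp: "\<forall>x\<in>V. x \<noteq> w0 \<longrightarrow> x = r \<or> x = p \<or> E x r \<or> E x p"
        using gS[OF w0(1,2)] by blast
      show ?thesis
      proof (cases "p = r")
        case True
        then show ?thesis using dp sV \<open>s \<noteq> w0\<close> rs(5) sym by blast
      next
        case False
        then have Erp: "E r p" using p(4) by simp
        show ?thesis
        proof (cases "p = s")
          case True
          then show ?thesis using Erp by simp
        next
          case False
          have pC: "p \<notin> C"
          proof
            assume "p \<in> C"
            then show False using cliqueD[OF C w0(1) _ p(2)[symmetric]] p(3) by auto
          qed
          then have pI: "p \<in> I" using p(1) VV \<open>p \<noteq> r\<close> False by auto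
          have "p = w0 \<or> p = z \<or> E p w0 \<or> E p z" using cw(3) p(1) False by blast
          moreover have "p \<noteq> z" using Ew0z p(3) by auto
          moreover have "\<not> E p w0" using p(3) sym by blast
          ultimately have Epz: "E p z" using p(2) by simp
          have "z \<in> I \<or> z \<in> C \<or> z = r \<or> z = s" using cw(1) VV by auto
          moreover have "z \<notin> I" using indepD[OF I pI] Epz by auto
          moreover have "z \<notin> C"
          proof
            assume zC: "z \<in> C"
            show False
            proof (cases "z = c")
              case True
              then show False using indepD[OF I pI cI] Epz by simp
            next
              case False
              then show False using nrC[OF zC False] Erz by simp
            qed
          qed
          moreover have "z \<noteq> r" using Erz irr by auto
          moreover have "z \<noteq> s" using Ew0z w0(3) sym by blast
          ultimately show ?thesis by blast
        qed
      qed
    qed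
  qed
  obtain y1 where y1: "y1 \<in> V" "y1 \<noteq> r" "y1 \<noteq> c" "\<not> E y1 r" "\<not> E y1 c"
    using nodom[OF rV cV] Erc by blast
  have y1I: "y1 \<in> I"
  proof -
    have "y1 \<notin> C" using y1 cliqueD[OF C _ cC] by blast
    moreover have "y1 \<noteq> s" using y1(4) Ers sym by blast
    ultimately show ?thesis using y1(1,2) VV by auto
  qed
  have dom_rs: "\<forall>x\<in>V. x \<noteq> w \<longrightarrow> x = r \<or> x = s \<or> E x r \<or> E x s" if w: "w \<in> C" "w \<noteq> c" for w
  proof -
    obtain p where p: "p \<in> V" "p \<noteq> w" "\<not> E w p" "p = r \<or> E r p"
      and dp: "\<forall>x\<in>V. x \<noteq> w \<longrightarrow> x = r \<or> x = p \<or> E x r \<or> E x p"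
      using gS[OF w] by blast
    have "y1 \<noteq> w" using y1I w CnI by auto
    then have "y1 = r \<or> y1 = p \<or> E y1 r \<or> E y1 p" using dp y1(1) by blast
    then have A: "y1 = p \<or> E y1 p" using y1 by simp
    have "p = s"
    proof (rule ccontr)
      assume "p \<noteq> s"
      have "p \<noteq> r" using A y1(2,4) by auto
      then have Erp: "E r p" using p(4) by simp
      have "y1 \<noteq> p" using Erp y1(4) sym by blast
      then have Ey1p: "E y1 p" using A by simp
      have "p \<notin> I" using indepD[OF I y1I] Ey1p by auto
      moreover have "p \<notin> C"
      proof
        assume pC: "p \<in> C"
        show False
        proof (cases "p = c")
          case True
          then show False using Ey1p y1(5) by simp
        next
          case False
          then show False using cliqueD[OF C w(1) pC p(2)[symmetric]] p(3) by simp
        qed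
      qed
      ultimately show False using p(1) VV \<open>p \<noteq> r\<close> \<open>p \<noteq> s\<close> by auto
    qed
    then show ?thesis using dp by simp
  qed
  have C2: "C = {c, w0}"
  proof (rule ccontr)
    assume "C \<noteq> {c, w0}"
    then have "\<not> C \<subseteq> {c, w0}" using cC w0(1) by auto
    then obtain w1 where w1: "w1 \<in> C" "w1 \<noteq> c" "w1 \<noteq> w0" by auto
    obtain x where x: "x \<in> V" "x \<noteq> r" "x \<noteq> s" "\<not> E x r" "\<not> E x s"
      using nodom[OF rV sV] Ers by blast
    show False
    proof (cases "x = w0")
      case True
      then show False using dom_rs[OF w1(1,2)] x w1(3) by auto
    next
      case False
      then show False using dom_rs[OF w0(1,2)] x by auto
    qed
  qed
  have "I \<subseteq> V" using I unfolding independent_set_def by simp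
  then have "finite I" by (rule finite_subset[OF _ fin])
  have "card C = 2" using C2 w0(2) by simp
  moreover have "{c, y0, y1} \<subseteq> I" using cI y0 y1I by auto
  moreover have "card {c, y0, y1} = 3"
  proof -
    have "y0 \<noteq> y1" using y0(3) y1(4) sym by blast
    then show ?thesis using y0(2) y1(3) by auto
  qed
  ultimately have "3 \<le> card C" using card_mono[OF \<open>finite I\<close>, of "{c, y0, y1}"] cardIC by simp
  then show False using \<open>card C = 2\<close> by simp
qed


lemma G1_mem[simp]: "Vtx \<in> G1_V l" "Q i \<in> G1_V l \<longleftrightarrow> 1 \<le> i \<and> i \<le> l" "Z i \<in> G1_V l \<longleftrightarrow> 1 \<le> i \<and> i \<le> l"
  unfolding G1_V_def by auto

lemma caseA:
  assumes I: "independent_set V E I" and C: "clique V E C" and IC: "I \<inter> C = {}"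
    and VV: "V = I \<union> C \<union> {r}" and rs: "r \<notin> I" "r \<notin> C"
    and cI: "card I = l" and cC: "card C = l" and l2: "2 \<le> l"
  shows "in_G1 l V E"
proof -
  have "I \<subseteq> V" using I unfolding independent_set_def by simp
  then have finI: "finite I" by (rule finite_subset[OF _ fin])
  have "C \<subseteq> V" using C unfolding clique_def by simp
  then have finC: "finite C" by (rule finite_subset[OF _ fin])
  have I2: "2 \<le> card I" using cI l2 by simp
  have rV: "r \<in> V" using VV by simp
  have gS: "\<exists>p. p \<in> V \<and> p \<noteq> w \<and> \<not> E w p \<and> (p = r \<or> E r p) \<and> \<not> E w r \<and>
      (\<forall>x\<in>V. x \<noteq> w \<longrightarrow> x = r \<or> x = p \<or> E x r \<or> E x p)" if w: "w \<in> C" for w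
  proof -
    have wV: "w \<in> V" using w VV by auto
    have wI: "w \<notin> I" using w IC by auto
    have H: "\<And>a b. a \<in> V \<Longrightarrow> b \<in> V \<Longrightarrow> a \<noteq> w \<Longrightarrow> b \<noteq> w \<Longrightarrow> a = b \<or> E a b \<Longrightarrow>
       \<not> E w a \<Longrightarrow> \<not> E w b \<Longrightarrow> (\<And>x. x \<in> V \<Longrightarrow> x \<noteq> w \<Longrightarrow> x = a \<or> x = b \<or> E x a \<or> E x b)
       \<Longrightarrow> a = r \<or> b = r"
    proof -
      fix a b assume A: "a \<in> V" "b \<in> V" "a \<noteq> w" "b \<noteq> w" "a = b \<or> E a b" "\<not> E w a" "\<not> E w b"
        and D: "\<And>x. x \<in> V \<Longrightarrow> x \<noteq> w \<Longrightarrow> x = a \<or> x = b \<or> E x a \<or> E x b"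
      have "(a \<notin> I \<and> a \<notin> C) \<or> (b \<notin> I \<and> b \<notin> C)"
        by (rule Sw_out[OF I C w wI I2 A D])
      then show "a = r \<or> b = r" using A(1,2) VV by auto
    qed
    show ?thesis by (rule S_with[OF wV H])
  qed
  have nrC: "\<not> E w r" if "w \<in> C" for w using gS[OF that] by blast
  have xw: "\<exists>x. x \<in> I \<and> E r x \<and> \<not> E w x \<and> (\<forall>w'\<in>C. w' \<noteq> w \<longrightarrow> E w' x)" if w: "w \<in> C" for w
  proof -
    obtain p where p: "p \<in> V" "p \<noteq> w" "\<not> E w p" "p = r \<or> E r p"
      and dp: "\<forall>x\<in>V. x \<noteq> w \<longrightarrow> x = r \<or> x = p \<or> E x r \<or> E x p"
      using gS[OF w] by blast
    have "\<not> C \<subseteq> {w}"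
    proof
      assume "C \<subseteq> {w}"
      then have "card C \<le> card {w}" by (rule card_mono[rotated]) simp
      then show False using cC l2 by simp
    qed
    then obtain w' where w': "w' \<in> C" "w' \<noteq> w" by auto
    have w'V: "w' \<in> V" using w' VV by auto
    have "w' \<noteq> r" using w' rs by auto
    have "w' = r \<or> w' = p \<or> E w' r \<or> E w' p" using dp w'V w'(2) by blast
    then have A: "w' = p \<or> E w' p" using \<open>w' \<noteq> r\<close> nrC[OF w'(1)] by simp
    have "p \<noteq> r" using A \<open>w' \<noteq> r\<close> nrC[OF w'(1)] by auto
    then have Erp: "E r p" using p(4) by simp
    have "p \<notin> C"
    proof
      assume "p \<in> C"
      then show False using cliqueD[OF C w _ p(2)[symmetric]] p(3) by simp
    qed
    then have pI: "p \<in> I" using p(1) VV \<open>p \<noteq> r\<close> by auto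
    have "\<forall>w''\<in>C. w'' \<noteq> w \<longrightarrow> E w'' p"
    proof (intro ballI impI)
      fix w'' assume w'': "w'' \<in> C" "w'' \<noteq> w"
      have "w'' \<in> V" using w'' VV by auto
      then have "w'' = r \<or> w'' = p \<or> E w'' r \<or> E w'' p" using dp w''(2) by blast
      moreover have "w'' \<noteq> r" using w'' rs by auto
      moreover have "w'' \<noteq> p" using w'' pI IC by auto
      ultimately show "E w'' p" using nrC[OF w''(1)] by simp
    qed
    then show ?thesis using pI Erp p(3) by blast
  qed
  then have "\<forall>w\<in>C. \<exists>x. x \<in> I \<and> E r x \<and> \<not> E w x \<and> (\<forall>w'\<in>C. w' \<noteq> w \<longrightarrow> E w' x)" by blast
  from bchoice[OF this] obtain xf where xf: "\<forall>w\<in>C. xf w \<in> I \<and> E r (xf w) \<and> \<not> E w (xf w) \<and>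
      (\<forall>w'\<in>C. w' \<noteq> w \<longrightarrow> E w' (xf w))" by (elim exE) assumption
  have xf1: "xf w \<in> I" and xf2: "E r (xf w)" and xf3: "\<not> E w (xf w)"
    and xf4: "\<And>w'. w' \<in> C \<Longrightarrow> w' \<noteq> w \<Longrightarrow> E w' (xf w)" if "w \<in> C" for w
    using bspec[OF xf that] by auto
  have injx: "inj_on xf C"
  proof (rule inj_onI)
    fix w1 w2 assume w: "w1 \<in> C" "w2 \<in> C" "xf w1 = xf w2"
    show "w1 = w2"
    proof (rule ccontr)
      assume "w1 \<noteq> w2"
      then have "E w2 (xf w1)" using xf4[OF w(1) w(2)] by simp
      moreover have "\<not> E w2 (xf w2)" using xf3[OF w(2)] .
      ultimately show False using w(3) by simp
    qed
  qed
  have "xf ` C \<subseteq> I" using xf1 by auto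
  moreover have "card (xf ` C) = card I" using card_image[OF injx] cI cC by simp
  ultimately have xfC: "xf ` C = I" using card_subset_eq[OF finI] by blast
  obtain g where g: "bij_betw g {1..l} C" using ex_bij_betw_nat_finite_1[OF finC] cC by auto
  have gC: "g i \<in> C" if "1 \<le> i" "i \<le> l" for i using bij_betwE[OF g] that by auto
  have ginj: "g i = g j \<longleftrightarrow> i = j" if "1 \<le> i" "i \<le> l" "1 \<le> j" "j \<le> l" for i j
    using inj_onD[OF bij_betw_imp_inj_on[OF g], of i j] that by auto
  define h where "h = (\<lambda>v. case v of Vtx \<Rightarrow> r | Q i \<Rightarrow> g i | Z i \<Rightarrow> xf (g i))"
  have h_simps: "h Vtx = r" "h (Q i) = g i" "h (Z i) = xf (g i)" for i unfolding h_def by simp_all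
  have xgI: "xf (g i) \<in> I" if "1 \<le> i" "i \<le> l" for i using xf1 gC[OF that] by blast
  have xginj: "xf (g i) = xf (g j) \<longleftrightarrow> i = j" if "1 \<le> i" "i \<le> l" "1 \<le> j" "j \<le> l" for i j
    using ginj[OF that] inj_onD[OF injx _ gC[OF that(1,2)] gC[OF that(3,4)]] by auto
  have Cdisj: "x \<in> C \<Longrightarrow> x \<notin> I" for x using IC by auto
  have hinj: "inj_on h (G1_V l)"
  proof (rule inj_onI)
    fix u v assume uv: "u \<in> G1_V l" "v \<in> G1_V l" "h u = h v"
    show "u = v"
    proof (cases u)
      case Vtx
      then show ?thesis using uv rs gC xgI by (cases v) (auto simp: h_simps)
    next
      case (Q i)
      then show ?thesis using uv rs gC xgI ginj Cdisj by (cases v) (auto simp: h_simps, metis)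
    next
      case (Z i)
      then show ?thesis using uv rs gC xgI xginj Cdisj by (cases v) (auto simp: h_simps, metis)
    qed
  qed
  have himg: "h ` G1_V l = V"
  proof -
    have "G1_V l = {Vtx} \<union> Q ` {1..l} \<union> Z ` {1..l}" by (simp add: G1_V_def)
    then have "h ` G1_V l = {r} \<union> g ` {1..l} \<union> xf ` (g ` {1..l})"
      by (simp add: image_Un image_image h_simps)
    also have "g ` {1..l} = C" using g unfolding bij_betw_def by simp
    finally show ?thesis using xfC VV by auto
  qed
  have hE: "E (h u) (h v) \<longleftrightarrow> G1_adj u v" if uv: "u \<in> G1_V l" "v \<in> G1_V l" for u v
  proof (cases u)
    case Vtx
    then show ?thesis
    proof (cases v)
      case Vtx
      then show ?thesis using \<open>u = Vtx\<close> irr by (simp add: h_simps)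
    next
      case (Q j)
      then show ?thesis using \<open>u = Vtx\<close> uv nrC gC sym by (auto simp: h_simps)
    next
      case (Z j)
      then show ?thesis using \<open>u = Vtx\<close> uv xf gC by (auto simp: h_simps)
    qed
  next
    case (Q i)
    then show ?thesis
    proof (cases v)
      case Vtx
      then show ?thesis using \<open>u = Q i\<close> uv nrC gC by (auto simp: h_simps)
    next
      case (Q j)
      then show ?thesis using \<open>u = Q i\<close> uv gC ginj cliqueD[OF C] irr by (auto simp: h_simps)
    next
      case (Z j)
      have "E (g i) (xf (g j)) \<longleftrightarrow> i \<noteq> j"
        using uv \<open>u = Q i\<close> Z xf gC ginj by auto
      then show ?thesis using \<open>u = Q i\<close> Z by (auto simp: h_simps)
    qed
  next
    case (Z i)
    then show ?thesis
    proof (cases v)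
      case Vtx
      then show ?thesis using \<open>u = Z i\<close> uv xf gC sym by (auto simp: h_simps)
    next
      case (Q j)
      have "E (g j) (xf (g i)) \<longleftrightarrow> i \<noteq> j"
        using uv \<open>u = Z i\<close> Q xf gC ginj by auto
      then show ?thesis using \<open>u = Z i\<close> Q sym by (auto simp: h_simps)
    next
      case (Z j)
      then show ?thesis using \<open>u = Z i\<close> uv xgI indepD[OF I] by (auto simp: h_simps)
    qed
  qed
  have hb: "bij_betw h (G1_V l) V" using hinj himg unfolding bij_betw_def by simp
  define f where "f = inv_into (G1_V l) h"
  have fb: "bij_betw f V (G1_V l)" unfolding f_def by (rule bij_betw_inv_into[OF hb])
  have "\<forall>x\<in>V. \<forall>y\<in>V. E x y \<longleftrightarrow> G1_E l (f x) (f y)"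
  proof (intro ballI)
    fix x y assume xy: "x \<in> V" "y \<in> V"
    have fx: "f x \<in> G1_V l" "h (f x) = x" using xy himg unfolding f_def
      by (auto intro: inv_into_into f_inv_into_f)
    have fy: "f y \<in> G1_V l" "h (f y) = y" using xy himg unfolding f_def
      by (auto intro: inv_into_into f_inv_into_f)
    show "E x y \<longleftrightarrow> G1_E l (f x) (f y)"
      using hE[OF fx(1) fy(1)] fx fy unfolding G1_E_def by simp
  qed
  then show ?thesis unfolding in_G1_def graph_iso_def using fb by blast
qed


lemma IC_cases:
  assumes I: "independent_set V E I" and C: "clique V E C"
  shows "I \<inter> C = {} \<or> (\<exists>c. I \<inter> C = {c})"
proof (cases "I \<inter> C = {}")
  case False
  then obtain c where c: "c \<in> I \<inter> C" by blast
  have "I \<inter> C = {c}"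
  proof
    show "I \<inter> C \<subseteq> {c}"
    proof
      fix x assume x: "x \<in> I \<inter> C"
      show "x \<in> {c}"
      proof (rule ccontr)
        assume "x \<notin> {c}"
        then have "E x c" using cliqueD[OF C _ _] x c by auto
        then show False using indepD[OF I _ _] x c by auto
      qed
    qed
    show "{c} \<subseteq> I \<inter> C" using c by auto
  qed
  then show ?thesis by blast
qed simp

lemma two_elems:
  assumes "finite A" "2 \<le> card A" "c \<in> A"
  obtains w where "w \<in> A" "w \<noteq> c"
proof -
  have "\<not> A \<subseteq> {c}"
  proof
    assume "A \<subseteq> {c}"
    then have "card A \<le> card {c}" by (rule card_mono[rotated]) simp
    then show False using assms(2) by simp
  qed
  then show ?thesis using that by auto
qed

lemma bound:
  assumes I: "independent_set V E I" and C: "clique V E C"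
    and I2: "2 \<le> card I" and C2: "2 \<le> card C"
  shows "card I + card C + 1 \<le> card V"
proof -
  have IV: "I \<subseteq> V" using I unfolding independent_set_def by simp
  then have finI: "finite I" by (rule finite_subset[OF _ fin])
  have CV: "C \<subseteq> V" using C unfolding clique_def by simp
  then have finC: "finite C" by (rule finite_subset[OF _ fin])
  have cUI: "card I + card C = card (I \<union> C) + card (I \<inter> C)"
    using card_Un_Int[OF finI finC] .
  from IC_cases[OF I C] show ?thesis
  proof
    assume IC: "I \<inter> C = {}"
    have "C \<noteq> {}" using C2 by auto
    then obtain w where w: "w \<in> C" by blast
    then have "w \<notin> I" using IC by auto
    obtain t where t: "t \<in> V" "t \<notin> I" "t \<notin> C" using T1[OF I C w \<open>w \<notin> I\<close> I2] by blast
    have "card (I \<union> C \<union> {t}) = card (I \<union> C) + 1" using t finI finC by simp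
    moreover have "card (I \<union> C \<union> {t}) \<le> card V"
      using IV CV t(1) by (intro card_mono[OF fin]) auto
    ultimately show ?thesis using cUI IC by simp
  next
    assume "\<exists>c. I \<inter> C = {c}"
    then obtain c where IC: "I \<inter> C = {c}" by blast
    have cC: "c \<in> C" using IC by auto
    obtain w where w: "w \<in> C" "w \<noteq> c" using two_elems[OF finC C2 cC] by blast
    obtain r where r: "r \<in> V" "r \<notin> I" "r \<notin> C" "E r c" using Bn[OF I C IC w] by blast
    obtain s where s: "s \<in> V" "s \<notin> I" "s \<notin> C" "\<not> E s c" using Bc[OF I C IC w] by blast
    have "r \<noteq> s" using r s by auto
    have "card (I \<union> C \<union> {r, s}) = card (I \<union> C) + 2" using r s \<open>r \<noteq> s\<close> finI finC by simp
    moreover have "card (I \<union> C \<union> {r, s}) \<le> card V"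
      using IV CV r(1) s(1) by (intro card_mono[OF fin]) auto
    ultimately show ?thesis using cUI IC by simp
  qed
qed

lemma eqG1:
  assumes I: "independent_set V E I" and C: "clique V E C"
    and cI: "card I = l" and cC: "card C = l" and l2: "2 \<le> l" and cV: "card V = 2 * l + 1"
  shows "in_G1 l V E"
proof -
  have IV: "I \<subseteq> V" using I unfolding independent_set_def by simp
  then have finI: "finite I" by (rule finite_subset[OF _ fin])
  have CV: "C \<subseteq> V" using C unfolding clique_def by simp
  then have finC: "finite C" by (rule finite_subset[OF _ fin])
  have cUI: "card I + card C = card (I \<union> C) + card (I \<inter> C)"
    using card_Un_Int[OF finI finC] .
  have I2: "2 \<le> card I" using cI l2 by simp
  have C2: "2 \<le> card C" using cC l2 by simp
  from IC_cases[OF I C] show ?thesis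
  proof
    assume IC: "I \<inter> C = {}"
    have "C \<noteq> {}" using C2 by auto
    then obtain w where w: "w \<in> C" by blast
    then have "w \<notin> I" using IC by auto
    obtain t where t: "t \<in> V" "t \<notin> I" "t \<notin> C" using T1[OF I C w \<open>w \<notin> I\<close> I2] by blast
    have "card (I \<union> C \<union> {t}) = card (I \<union> C) + 1" using t finI finC by simp
    then have "card (I \<union> C \<union> {t}) = card V" using cUI IC cI cC cV by simp
    moreover have "I \<union> C \<union> {t} \<subseteq> V" using IV CV t(1) by auto
    ultimately have VV: "V = I \<union> C \<union> {t}" using card_subset_eq[OF fin] by metis
    show ?thesis by (rule caseA[OF I C IC VV t(2,3) cI cC l2])
  next
    assume "\<exists>c. I \<inter> C = {c}"
    then obtain c where IC: "I \<inter> C = {c}" by blast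
    have cinC: "c \<in> C" and cII: "c \<in> I" using IC by auto
    obtain w where w: "w \<in> C" "w \<noteq> c" using two_elems[OF finC C2 cinC] by blast
    obtain r where r: "r \<in> V" "r \<notin> I" "r \<notin> C" "E r c" using Bn[OF I C IC w] by blast
    obtain s where s: "s \<in> V" "s \<notin> I" "s \<notin> C" "\<not> E s c" using Bc[OF I C IC w] by blast
    have "r \<noteq> s" using r s by auto
    have "card (I \<union> C \<union> {r, s}) = card (I \<union> C) + 2" using r s \<open>r \<noteq> s\<close> finI finC by simp
    then have "card (I \<union> C \<union> {r, s}) = card V" using cUI IC cI cC cV by simp
    moreover have "I \<union> C \<union> {r, s} \<subseteq> V" using IV CV r(1) s(1) by auto
    ultimately have VV: "V = I \<union> C \<union> {r, s}" using card_subset_eq[OF fin] by metis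
    show ?thesis
    proof (cases "\<forall>w\<in>C. w \<noteq> c \<longrightarrow> E s w")
      case True
      define C' where "C' = (C - {c}) \<union> {s}"
      have C': "clique V E C'" unfolding clique_def
      proof
        show "C' \<subseteq> V" using CV s(1) unfolding C'_def by auto
        show "\<forall>x\<in>C'. \<forall>y\<in>C'. x \<noteq> y \<longrightarrow> E x y"
          using True sym cliqueD[OF C] unfolding C'_def by auto
      qed
      have "card C' = l" unfolding C'_def using finC s(3) cinC cC l2 by (simp add: card_Diff_singleton)
      moreover have "I \<inter> C' = {}" using IC s(2) unfolding C'_def by auto
      moreover have "V = I \<union> C' \<union> {r}" using VV cII unfolding C'_def by auto
      moreover have "r \<notin> C'" using r(3) \<open>r \<noteq> s\<close> unfolding C'_def by auto
      ultimately show ?thesis using caseA[OF I C' _ _ r(2) _ cI _ l2] by blast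
    next
      case False
      then obtain w0 where w0: "w0 \<in> C" "w0 \<noteq> c" "\<not> E s w0" by blast
      show ?thesis
      proof (cases "\<forall>y\<in>I. y \<noteq> c \<longrightarrow> \<not> E r y")
        case True
        define I' where "I' = (I - {c}) \<union> {r}"
        have I': "independent_set V E I'" unfolding independent_set_def
        proof
          show "I' \<subseteq> V" using IV r(1) unfolding I'_def by auto
          show "\<forall>x\<in>I'. \<forall>y\<in>I'. \<not> E x y"
            using True sym irr indepD[OF I] unfolding I'_def by blast
        qed
        have "card I' = l" unfolding I'_def using finI r(2) cII cI l2 by (simp add: card_Diff_singleton)
        moreover have "I' \<inter> C = {}" using IC r(3) unfolding I'_def by auto
        moreover have "V = I' \<union> C \<union> {s}" using VV cinC unfolding I'_def by auto
        moreover have "s \<notin> I'" using s(2) \<open>r \<noteq> s\<close> unfolding I'_def by auto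
        ultimately show ?thesis using caseA[OF I' C _ _ _ s(3) _ cC l2] by blast
      next
        case False
        then obtain y0 where y0: "y0 \<in> I" "y0 \<noteq> c" "E r y0" by blast
        have "card I = card C" using cI cC by simp
        have False
          by (rule B2[OF I C IC \<open>card I = card C\<close> VV r(2,3) s(2,3) \<open>r \<noteq> s\<close> r(4) s(4) w0 y0])
        then show ?thesis ..
      qed
    qed
  qed
qed

end



lemma conn_pair:
  assumes "a = b \<or> E a b" and sym: "\<And>x y. E x y \<Longrightarrow> E y x"
  shows "connected_set E {a, b}"
  unfolding connected_set_def
proof (intro conjI ballI)
  show "{a, b} \<noteq> {}" by simp
  fix u v assume uv: "u \<in> {a, b}" "v \<in> {a, b}"
  let ?R = "\<lambda>x y. x \<in> {a, b} \<and> y \<in> {a, b} \<and> E x y"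
  have ab: "?R\<^sup>*\<^sup>* a b" and ba: "?R\<^sup>*\<^sup>* b a"
    using assms by (auto intro: r_into_rtranclp)
  show "?R\<^sup>*\<^sup>* u v" using uv ab ba by auto
qed

lemma pair_conn:
  assumes "connected_set E {a, b}" "a \<noteq> b" and irr: "\<And>x. \<not> E x x"
  shows "E a b"
proof -
  let ?R = "\<lambda>x y. x \<in> {a, b} \<and> y \<in> {a, b} \<and> E x y"
  have "?R\<^sup>*\<^sup>* a b" using assms(1) unfolding connected_set_def by auto
  then show ?thesis
  proof (cases rule: converse_rtranclpE)
    case base
    then show ?thesis using assms(2) by simp
  next
    case (step y)
    then show ?thesis using irr by auto
  qed
qed

lemma set_two:
  assumes "finite D" "D \<noteq> {}" "card D \<le> 2"
  obtains a b where "D = {a, b}"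
proof -
  have "card D = 1 \<or> card D = 2" using assms card_0_eq by fastforce
  then show ?thesis
  proof
    assume "card D = 1"
    then obtain a where "D = {a}" by (rule card_1_singletonE)
    then show ?thesis using that[of a a] by simp
  next
    assume "card D = 2"
    then obtain a b where "D = {a, b}" using card_2_iff by metis
    then show ?thesis using that by blast
  qed
qed

lemma gamma_le:
  assumes "connected_dominating V E D"
  shows "gamma_c V E \<le> card D"
  unfolding gamma_c_def by (rule Least_le) (use assms in blast)

lemma gamma_ex:
  assumes "connected_dominating V E D" "finite V"
  obtains D' where "connected_dominating V E D'" "card D' = gamma_c V E" "finite D'"
proof -
  have "\<exists>k. \<exists>D. connected_dominating V E D \<and> card D = k" using assms by blast
  from LeastI_ex[OF this] obtain D' where "connected_dominating V E D'" "card D' = gamma_c V E"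
    unfolding gamma_c_def by blast
  moreover have "finite D'" using \<open>connected_dominating V E D'\<close> assms(2)
    unfolding connected_dominating_def dominating_def using finite_subset by blast
  ultimately show ?thesis using that by blast
qed


definition ecform :: "'a set \<Rightarrow> ('a \<Rightarrow> 'a \<Rightarrow> bool) \<Rightarrow> 'a \<Rightarrow> 'a \<Rightarrow> bool" where
  "ecform V E u v \<longleftrightarrow> (\<forall>x\<in>V. x = u \<or> x = v \<or> E x u \<or> E x v) \<or>
       (\<exists>z\<in>V. (z = u \<or> E u z) \<and> (\<forall>x\<in>V. x \<noteq> v \<longrightarrow> x = u \<or> x = z \<or> E x u \<or> E x z)) \<or>
       (\<exists>z\<in>V. (z = v \<or> E v z) \<and> (\<forall>x\<in>V. x \<noteq> u \<longrightarrow> x = v \<or> x = z \<or> E x v \<or> E x z))"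

lemma ecform_sym: "ecform V E u v = ecform V E v u"
  unfolding ecform_def by blast

lemma add_edge_sym: "add_edge E u v = add_edge E v u"
  unfolding add_edge_def by (intro ext) auto

lemma ec_core:
  assumes sym: "\<And>x y. E x y \<Longrightarrow> E y x" and uv: "u \<noteq> v" and bV: "b \<in> V" and uV: "u \<in> V"
    and conn: "u = b \<or> add_edge E u v u b"
    and Dm: "\<forall>x\<in>V. x = u \<or> x = b \<or> add_edge E u v x u \<or> add_edge E u v x b"
  shows "ecform V E u v"
proof (cases "b = v")
  case True
  have "\<forall>x\<in>V. x = u \<or> x = v \<or> E x u \<or> E x v"
    using Dm True unfolding add_edge_def by auto
  then show ?thesis unfolding ecform_def by blast
next
  case False
  note bv = False
  show ?thesis
  proof (cases "b = u")
    case True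
    have "\<forall>x\<in>V. x \<noteq> v \<longrightarrow> x = u \<or> x = u \<or> E x u \<or> E x u"
      using Dm True unfolding add_edge_def by auto
    then show ?thesis unfolding ecform_def using uV by blast
  next
    case False
    have "E u b" using conn False bv unfolding add_edge_def by auto
    moreover have "\<forall>x\<in>V. x \<noteq> v \<longrightarrow> x = u \<or> x = b \<or> E x u \<or> E x b"
      using Dm bv False uv unfolding add_edge_def by auto
    ultimately show ?thesis unfolding ecform_def using bV by blast
  qed
qed

lemma extract_nodom:
  assumes sym: "\<And>x y. E x y \<Longrightarrow> E y x" and g: "gamma_c V E = 3"
    and ab: "a \<in> V" "b \<in> V" "a = b \<or> E a b"
  shows "\<exists>x\<in>V. x \<noteq> a \<and> x \<noteq> b \<and> \<not> E x a \<and> \<not> E x b"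
proof (rule ccontr)
  assume "\<not> ?thesis"
  then have "dominating V E {a, b}" unfolding dominating_def using ab by auto
  moreover have "connected_set E {a, b}" by (rule conn_pair[where E=E, OF ab(3) sym])
  ultimately have "gamma_c V E \<le> card {a, b}"
    by (intro gamma_le) (simp add: connected_dominating_def)
  moreover have "card {a, b} \<le> 2" by (simp add: card_insert_le_m1)
  ultimately show False using g by simp
qed

lemma extract_vc:
  assumes sg: "simple_graph V E" and w: "w \<in> V"
    and cg: "connected_graph (V - {w}) (del_vertex_edges E w)"
    and g: "gamma_c (V - {w}) (del_vertex_edges E w) < 3"
  shows "\<exists>a b. a \<in> V \<and> b \<in> V \<and> a \<noteq> w \<and> b \<noteq> w \<and> (a = b \<or> E a b) \<and>
       (\<forall>x\<in>V. x \<noteq> w \<longrightarrow> x = a \<or> x = b \<or> E x a \<or> E x b)"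
proof -
  let ?E = "del_vertex_edges E w"
  have fin: "finite V" using sg unfolding simple_graph_def by simp
  have "connected_dominating (V - {w}) ?E (V - {w})"
    using cg unfolding connected_dominating_def dominating_def connected_graph_def by auto
  then obtain D where D: "connected_dominating (V - {w}) ?E D" "card D = gamma_c (V - {w}) ?E" "finite D"
    using gamma_ex fin by blast
  have "D \<noteq> {}" using D(1) unfolding connected_dominating_def connected_set_def by simp
  moreover have "card D \<le> 2" using D(2) g by simp
  ultimately obtain a b where Dab: "D = {a, b}" using set_two[OF D(3)] by blast
  have sub: "a \<in> V - {w}" "b \<in> V - {w}" using D(1) Dab unfolding connected_dominating_def dominating_def by auto
  have irrE: "\<And>x. \<not> ?E x x" using sg unfolding simple_graph_def del_vertex_edges_def by auto
  have ab: "a = b \<or> E a b"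
  proof (cases "a = b")
    case False
    have "connected_set ?E {a, b}" using D(1) Dab unfolding connected_dominating_def by simp
    from pair_conn[OF this False irrE] show ?thesis unfolding del_vertex_edges_def by simp
  qed simp
  have "\<forall>x\<in>V. x \<noteq> w \<longrightarrow> x = a \<or> x = b \<or> E x a \<or> E x b"
    using D(1) Dab unfolding connected_dominating_def dominating_def del_vertex_edges_def by auto
  then show ?thesis using sub ab by blast
qed

lemma extract_ec:
  assumes sg: "simple_graph V E" and cs: "connected_set E V" and g3: "gamma_c V E = 3"
    and uv: "u \<in> V" "v \<in> V" "u \<noteq> v" "\<not> E u v"
    and g: "gamma_c V (add_edge E u v) < 3"
  shows "ecform V E u v"
proof -
  let ?E = "add_edge E u v"
  have fin: "finite V" using sg unfolding simple_graph_def by simp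
  have sym: "\<And>x y. E x y \<Longrightarrow> E y x" and irr: "\<And>x. \<not> E x x"
    using sg unfolding simple_graph_def by auto
  have "connected_set ?E V"
    using cs unfolding connected_set_def
  proof (intro conjI ballI)
    fix x y assume "V \<noteq> {} \<and> (\<forall>u\<in>V. \<forall>v\<in>V. (\<lambda>x y. x \<in> V \<and> y \<in> V \<and> E x y)\<^sup>*\<^sup>* u v)" "x \<in> V" "y \<in> V"
    then have rt: "(\<lambda>x y. x \<in> V \<and> y \<in> V \<and> E x y)\<^sup>*\<^sup>* x y" by blast
    have le: "(\<lambda>x y. x \<in> V \<and> y \<in> V \<and> E x y) \<le> (\<lambda>x y. x \<in> V \<and> y \<in> V \<and> ?E x y)"
      unfolding add_edge_def by auto
    show "(\<lambda>x y. x \<in> V \<and> y \<in> V \<and> ?E x y)\<^sup>*\<^sup>* x y"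
      by (rule predicate2D[OF rtranclp_mono[OF le] rt])
  qed (use cs in \<open>simp add: connected_set_def\<close>)
  then have "connected_dominating V ?E V"
    unfolding connected_dominating_def dominating_def by auto
  then obtain D where D: "connected_dominating V ?E D" "card D = gamma_c V ?E" "finite D"
    using gamma_ex fin by blast
  have "D \<noteq> {}" using D(1) unfolding connected_dominating_def connected_set_def by simp
  moreover have "card D \<le> 2" using D(2) g by simp
  ultimately obtain a b where Dab: "D = {a, b}" using set_two[OF D(3)] by blast
  have sub: "a \<in> V" "b \<in> V" using D(1) Dab unfolding connected_dominating_def dominating_def by auto
  have irrE: "\<And>x. \<not> ?E x x" using irr uv(3) unfolding add_edge_def by auto
  have ab: "a = b \<or> ?E a b"
  proof (cases "a = b")
    case False
    have "connected_set ?E {a, b}" using D(1) Dab unfolding connected_dominating_def by simp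
    from pair_conn[OF this False irrE] show ?thesis by simp
  qed simp
  have ba: "b = a \<or> ?E b a" using ab unfolding add_edge_def using sym by auto
  have Dm: "\<forall>x\<in>V. x = a \<or> x = b \<or> ?E x a \<or> ?E x b"
    using D(1) Dab unfolding connected_dominating_def dominating_def by auto
  have Dm': "\<forall>x\<in>V. x = b \<or> x = a \<or> ?E x b \<or> ?E x a" using Dm by blast
  have sv: "add_edge E v u = ?E" by (rule add_edge_sym)
  show ?thesis
  proof (cases "a = u")
    case True
    show ?thesis by (rule ec_core[OF sym uv(3) sub(2) uv(1)]) (use ab Dm True in auto)
  next
    case au: False
    show ?thesis
    proof (cases "a = v")
      case True
      have "ecform V E v u"
        by (rule ec_core[OF sym uv(3)[symmetric] sub(2) uv(2)]) (use ab Dm True sv in auto)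
      then show ?thesis using ecform_sym by metis
    next
      case av: False
      show ?thesis
      proof (cases "b = u")
        case True
        show ?thesis by (rule ec_core[OF sym uv(3) sub(1) uv(1)]) (use ba Dm' True in auto)
      next
        case bu: False
        show ?thesis
        proof (cases "b = v")
          case True
          have "ecform V E v u"
            by (rule ec_core[OF sym uv(3)[symmetric] sub(1) uv(2)]) (use ba Dm' True sv in auto)
          then show ?thesis using ecform_sym by metis
        next
          case bv: False
          have "a = b \<or> E a b" using ab au av bu bv unfolding add_edge_def by auto
          from extract_nodom[OF sym g3 sub this] obtain x where
            x: "x \<in> V" "x \<noteq> a" "x \<noteq> b" "\<not> E x a" "\<not> E x b" by blast
          have "?E x a \<or> ?E x b" using Dm x by auto
          then show ?thesis using x au av bu bv unfolding add_edge_def by auto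
        qed
      qed
    qed
  qed
qed




lemma amgm: "4 * (a * b) \<le> (a + b)^2" for a b :: nat
proof -
  have "(int a + int b)^2 = (int a - int b)^2 + 4 * (int a * int b)"
    by (simp add: power2_eq_square algebra_simps)
  moreover have "0 \<le> (int a - int b)^2" by simp
  ultimately have "int (4 * (a * b)) \<le> int ((a + b)^2)" by simp
  then show ?thesis by (simp only: of_nat_le_iff)
qed

lemma arith1:
  fixes a b n :: nat
  assumes h: "a + b + 1 \<le> n"
  shows "int (a * b) \<le> \<lfloor>(real n - 1) / 2\<rfloor> * \<lceil>(real n - 1) / 2\<rceil>"
proof -
  define k where "k = (n - 1) div 2"
  have rn: "real n - 1 = real (n - 1)" using h by simp
  have s: "a + b \<le> n - 1" using h by simp
  have "n - 1 = 2 * k \<or> n - 1 = 2 * k + 1" unfolding k_def by presburger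
  then show ?thesis
  proof
    assume m: "n - 1 = 2 * k"
    have x: "(real n - 1) / 2 = real k" using rn m by simp
    have "(a + b)^2 \<le> (2 * k)^2" by (rule power_mono) (use s m in auto)
    then have "4 * (a * b) \<le> 4 * (k * k)" using amgm[of a b] by (simp add: power2_eq_square)
    then have "a * b \<le> k * k" by simp
    then have "int (a * b) \<le> int k * int k" by (metis of_nat_le_iff of_nat_mult)
    then show ?thesis unfolding x by simp
  next
    assume m: "n - 1 = 2 * k + 1"
    have x: "(real n - 1) / 2 = real k + 1 / 2" using rn m by simp
    have fl: "\<lfloor>real k + 1 / 2\<rfloor> = int k" by (simp add: floor_eq_iff)
    have ce: "\<lceil>real k + 1 / 2\<rceil> = int k + 1" by (simp add: ceiling_eq_iff)
    have "(a + b)^2 \<le> (2 * k + 1)^2" by (rule power_mono) (use s m in auto)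
    then have "4 * (a * b) \<le> 4 * (k * k + k) + 1" using amgm[of a b] by (simp add: power2_eq_square algebra_simps)
    moreover have "\<And>P Q::nat. 4 * P \<le> 4 * Q + 1 \<Longrightarrow> P \<le> Q" by presburger
    ultimately have "a * b \<le> k * k + k" by blast
    then have "int (a * b) \<le> int k * (int k + 1)" by (simp add: algebra_simps) (metis of_nat_add of_nat_le_iff of_nat_mult)
    then show ?thesis unfolding x fl ce by simp
  qed
qed

lemma arith2:
  fixes a b n :: nat
  assumes h: "a + b + 1 \<le> n" and eq: "real (a * b) = ((real n - 1) / 2)^2"
  shows "a = b \<and> n = 2 * a + 1"
proof -
  define m where "m = n - 1"
  have rn: "real n - 1 = real m" using h unfolding m_def by simp
  have s: "a + b \<le> m" using h unfolding m_def by simp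
  have "4 * real (a * b) = (real m)^2" using eq rn by (simp add: power_divide)
  then have "real (4 * (a * b)) = real (m^2)" by simp
  then have e4: "4 * (a * b) = m^2" by (simp only: of_nat_eq_iff)
  have "m^2 \<le> (a + b)^2" using amgm[of a b] e4 by simp
  moreover have "(a + b)^2 \<le> m^2" by (rule power_mono) (use s in auto)
  ultimately have sq: "(a + b)^2 = m^2" by simp
  have "a + b = m"
  proof (rule ccontr)
    assume "a + b \<noteq> m"
    then have "a + b < m" using s by simp
    then have "(a + b)^2 < m^2" by (simp add: power_strict_mono)
    then show False using sq by simp
  qed
  have "(int a + int b)^2 = (int a - int b)^2 + 4 * (int a * int b)"
    by (simp add: power2_eq_square algebra_simps)
  moreover have "(int a + int b)^2 = 4 * (int a * int b)"
  proof -
    have "int ((a + b)^2) = int (4 * (a * b))" using sq e4 by simp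
    then show ?thesis by simp
  qed
  ultimately have "(int a - int b)^2 = 0" by simp
  then have "a = b" by simp
  then show ?thesis using \<open>a + b = m\<close> h unfolding m_def by simp
qed




lemma card_G1: "card (G1_V l) = 2 * l + 1"
proof -
  have "G1_V l = insert Vtx (Q ` {1..l} \<union> Z ` {1..l})" unfolding G1_V_def by auto
  moreover have "Vtx \<notin> Q ` {1..l} \<union> Z ` {1..l}" by auto
  moreover have "Q ` {1..l} \<inter> Z ` {1..l} = {}" by auto
  moreover have "card (Q ` {1..l}) = l" by (simp add: card_image inj_on_def)
  moreover have "card (Z ` {1..l}) = l" by (simp add: card_image inj_on_def)
  ultimately show ?thesis by (simp add: card_Un_disjoint)
qed

lemma preimage_card:
  assumes f: "bij_betw f V W" and A: "A \<subseteq> W"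
  shows "card {x \<in> V. f x \<in> A} = card A"
proof -
  have "inj_on f {x \<in> V. f x \<in> A}" using bij_betw_imp_inj_on[OF f] by (rule inj_on_subset) auto
  moreover have "f ` {x \<in> V. f x \<in> A} = A"
  proof
    show "f ` {x \<in> V. f x \<in> A} \<subseteq> A" by auto
    show "A \<subseteq> f ` {x \<in> V. f x \<in> A}"
    proof
      fix a assume "a \<in> A"
      then have "a \<in> f ` V" using A bij_betw_imp_surj_on[OF f] by auto
      then obtain x where "x \<in> V" "a = f x" by auto
      then show "a \<in> f ` {x \<in> V. f x \<in> A}" using \<open>a \<in> A\<close> by auto
    qed
  qed
  ultimately show ?thesis using card_image by metis
qed

theorem corollary3p7:
  fixes V :: "'a set" and E :: "'a \<Rightarrow> 'a \<Rightarrow> bool"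
  assumes "connected_graph V E"
    and "maximal_vertex_critical 3 V E"
  defines "n \<equiv> card V"
    and "\<alpha> \<equiv> independence_number V E"
    and "\<omega> \<equiv> clique_number V E"
  shows "int (\<alpha> * \<omega>) \<le> \<lfloor>(real n - 1) / 2\<rfloor> * \<lceil>(real n - 1) / 2\<rceil> \<and>
         (real (\<alpha> * \<omega>) = ((real n - 1) / 2)^2 \<longleftrightarrow> (\<exists>l\<ge>2. in_G1 l V E))"
proof -
  have sg: "simple_graph V E" and cs: "connected_set E V"
    using assms(1) unfolding connected_graph_def by auto
  have fin: "finite V" and Vne: "V \<noteq> {}" using sg unfolding simple_graph_def by auto
  have sym: "\<And>x y. E x y \<Longrightarrow> E y x" and irr: "\<And>x. \<not> E x x" and inV: "\<And>x y. E x y \<Longrightarrow> x \<in> V"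
    using sg unfolding simple_graph_def by auto
  have ecr: "edge_critical 3 V E" and vcr: "vertex_critical 3 V E"
    using assms(2) unfolding maximal_vertex_critical_def by auto
  have g3: "gamma_c V E = 3" using ecr unfolding edge_critical_def by simp
  have ecg: "\<And>u v. u \<in> V \<Longrightarrow> v \<in> V \<Longrightarrow> u \<noteq> v \<Longrightarrow> \<not> E u v \<Longrightarrow> gamma_c V (add_edge E u v) < 3"
    using ecr unfolding edge_critical_def by blast
  have tc: "two_connected V E" and vcg: "\<And>w. w \<in> V \<Longrightarrow> gamma_c (V - {w}) (del_vertex_edges E w) < 3"
    using vcr unfolding vertex_critical_def by auto
  have n3: "3 \<le> card V" and cgw: "\<And>w. w \<in> V \<Longrightarrow> connected_graph (V - {w}) (del_vertex_edges E w)"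
    using tc unfolding two_connected_def by auto
  have K: "crit V E"
  proof
    show "finite V" by (rule fin)
    show "\<And>x y. E x y \<Longrightarrow> E y x" by (rule sym)
    show "\<And>x. \<not> E x x" by (rule irr)
    show "\<And>x y. E x y \<Longrightarrow> x \<in> V" by (rule inV)
    show "\<And>a b. a \<in> V \<Longrightarrow> b \<in> V \<Longrightarrow> a = b \<or> E a b \<Longrightarrow>
       \<exists>x\<in>V. x \<noteq> a \<and> x \<noteq> b \<and> \<not> E x a \<and> \<not> E x b"
      by (rule extract_nodom[OF sym g3])
    show "\<And>w. w \<in> V \<Longrightarrow> \<exists>a b. a \<in> V \<and> b \<in> V \<and> a \<noteq> w \<and> b \<noteq> w \<and> (a = b \<or> E a b) \<and>
       (\<forall>x\<in>V. x \<noteq> w \<longrightarrow> x = a \<or> x = b \<or> E x a \<or> E x b)"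
      by (rule extract_vc[OF sg _ cgw vcg])
    show "\<And>u v. u \<in> V \<Longrightarrow> v \<in> V \<Longrightarrow> u \<noteq> v \<Longrightarrow> \<not> E u v \<Longrightarrow>
       (\<forall>x\<in>V. x = u \<or> x = v \<or> E x u \<or> E x v) \<or>
       (\<exists>z\<in>V. (z = u \<or> E u z) \<and> (\<forall>x\<in>V. x \<noteq> v \<longrightarrow> x = u \<or> x = z \<or> E x u \<or> E x z)) \<or>
       (\<exists>z\<in>V. (z = v \<or> E v z) \<and> (\<forall>x\<in>V. x \<noteq> u \<longrightarrow> x = v \<or> x = z \<or> E x v \<or> E x z))"
      using extract_ec[OF sg cs g3 _ _ _ _ ecg] unfolding ecform_def by blast
  qed
  interpret K: crit V E by (rule K)
  let ?SI = "{card S |S. independent_set V E S}"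
  let ?SC = "{card S |S. clique V E S}"
  have finSI: "finite ?SI"
  proof (rule finite_subset)
    show "?SI \<subseteq> card ` Pow V" unfolding independent_set_def by auto
    show "finite (card ` Pow V)" using fin by simp
  qed
  have finSC: "finite ?SC"
  proof (rule finite_subset)
    show "?SC \<subseteq> card ` Pow V" unfolding clique_def by auto
    show "finite (card ` Pow V)" using fin by simp
  qed
  have "independent_set V E {}" unfolding independent_set_def by simp
  then have neSI: "?SI \<noteq> {}" by blast
  have "clique V E {}" unfolding clique_def by simp
  then have neSC: "?SC \<noteq> {}" by blast
  have "\<alpha> \<in> ?SI" unfolding \<alpha>_def independence_number_def by (rule Max_in[OF finSI neSI])
  then obtain I where I: "independent_set V E I" "card I = \<alpha>" by auto
  have maxI: "card S \<le> \<alpha>" if "independent_set V E S" for S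
    unfolding \<alpha>_def independence_number_def using that by (intro Max_ge[OF finSI]) auto
  have "\<omega> \<in> ?SC" unfolding \<omega>_def clique_number_def by (rule Max_in[OF finSC neSC])
  then obtain C where C: "clique V E C" "card C = \<omega>" by auto
  have maxC: "card S \<le> \<omega>" if "clique V E S" for S
    unfolding \<omega>_def clique_number_def using that by (intro Max_ge[OF finSC]) auto
  obtain v where vV: "v \<in> V" using Vne by blast
  obtain x where x: "x \<in> V" "x \<noteq> v" "\<not> E x v" using extract_nodom[OF sym g3 vV vV] by blast
  have "independent_set V E {v, x}" unfolding independent_set_def using x vV irr sym by auto
  then have a2: "2 \<le> \<alpha>" using maxI x(2) by fastforce
  have "\<not> V \<subseteq> {v}"
  proof
    assume "V \<subseteq> {v}"
    then have "card V \<le> card {v}" by (rule card_mono[rotated]) simp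
    then show False using n3 by simp
  qed
  then obtain u where u: "u \<in> V" "u \<noteq> v" by auto
  let ?R = "\<lambda>x y. x \<in> V \<and> y \<in> V \<and> E x y"
  have "?R\<^sup>*\<^sup>* u v" using cs u(1) vV unfolding connected_set_def by blast
  then obtain y where y: "E u y"
  proof (cases rule: converse_rtranclpE)
    case base
    then show ?thesis using u(2) by simp
  next
    case (step y)
    then show ?thesis using that by blast
  qed
  have "clique V E {u, y}" unfolding clique_def using y u(1) inV sym by auto
  moreover have "u \<noteq> y" using y irr by auto
  ultimately have w2: "2 \<le> \<omega>" using maxC by fastforce
  have bnd: "\<alpha> + \<omega> + 1 \<le> n"
    using K.bound[OF I(1) C(1)] I(2) C(2) a2 w2 unfolding n_def by simp
  have part1: "int (\<alpha> * \<omega>) \<le> \<lfloor>(real n - 1) / 2\<rfloor> * \<lceil>(real n - 1) / 2\<rceil>"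
    by (rule arith1[OF bnd])
  have part2: "real (\<alpha> * \<omega>) = ((real n - 1) / 2)^2 \<longleftrightarrow> (\<exists>l\<ge>2. in_G1 l V E)"
  proof
    assume "real (\<alpha> * \<omega>) = ((real n - 1) / 2)^2"
    from arith2[OF bnd this] have ab: "\<alpha> = \<omega>" "n = 2 * \<alpha> + 1" by auto
    have "in_G1 \<alpha> V E"
      by (rule K.eqG1[OF I(1) C(1) I(2)]) (use C(2) ab a2 n_def in auto)
    then show "\<exists>l\<ge>2. in_G1 l V E" using a2 by blast
  next
    assume "\<exists>l\<ge>2. in_G1 l V E"
    then obtain l where l: "2 \<le> l" "in_G1 l V E" by blast
    then obtain f where f: "bij_betw f V (G1_V l)"
      and fE: "\<forall>x\<in>V. \<forall>y\<in>V. E x y \<longleftrightarrow> G1_E l (f x) (f y)"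
      unfolding in_G1_def graph_iso_def by blast
    have nl: "n = 2 * l + 1" unfolding n_def using bij_betw_same_card[OF f] card_G1 by simp
    have ZV: "Z ` {1..l} \<subseteq> G1_V l" and QV: "Q ` {1..l} \<subseteq> G1_V l" by auto
    define S where "S = {x \<in> V. f x \<in> Z ` {1..l}}"
    define T where "T = {x \<in> V. f x \<in> Q ` {1..l}}"
    have cS: "card S = l" unfolding S_def using preimage_card[OF f ZV] by (simp add: card_image inj_on_def)
    have cT: "card T = l" unfolding T_def using preimage_card[OF f QV] by (simp add: card_image inj_on_def)
    have "independent_set V E S" unfolding independent_set_def
    proof
      show "S \<subseteq> V" unfolding S_def by auto
      show "\<forall>x\<in>S. \<forall>y\<in>S. \<not> E x y"
      proof (intro ballI)
        fix x y assume "x \<in> S" "y \<in> S"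
        then show "\<not> E x y" using fE unfolding S_def G1_E_def by auto
      qed
    qed
    then have la: "l \<le> \<alpha>" using maxI cS by metis
    have "clique V E T" unfolding clique_def
    proof
      show "T \<subseteq> V" unfolding T_def by auto
      show "\<forall>x\<in>T. \<forall>y\<in>T. x \<noteq> y \<longrightarrow> E x y"
      proof (intro ballI impI)
        fix x y assume xy: "x \<in> T" "y \<in> T" "x \<noteq> y"
        have "f x \<noteq> f y" using xy inj_onD[OF bij_betw_imp_inj_on[OF f]] unfolding T_def by auto
        then show "E x y" using fE xy unfolding T_def G1_E_def by auto
      qed
    qed
    then have lw: "l \<le> \<omega>" using maxC cT by metis
    have "\<alpha> = l" "\<omega> = l" using la lw bnd nl by auto
    then show "real (\<alpha> * \<omega>) = ((real n - 1) / 2)^2" using nl by (simp add: power2_eq_square)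
  qed
  show ?thesis using part1 part2 by blast
qed


end
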